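(* Let $n,p$ be positive integers with $n-p-1>0$ and $\gamma\ge0$, and let $\pi_{\mathrm{MSVS1}}(M)=\det(M^\top M)^{-(n-p-1)/2}\|M\|_{\mathrm F}^{-\gamma}$ on $\mathbb R^{n\times p}$. Then at every $M$ with $M^\top M$ nonsingular, $$\Delta\pi_{\mathrm{MSVS1}}(M)=\gamma(\gamma+np-2p^2-2p+2)\|M\|_{\mathrm F}^{-2}\pi_{\mathrm{MSVS1}}(M),$$ where $\Delta=\sum_{a=1}^n\sum_{i=1}^p\partial^2/\partial M_{ai}^2$. *)

theory Defs
  imports "HOL-Analysis.Analysis"
begin

text \<open>Matrices in R^{n x p} are modelled as real^'p^'n (rows indexed by 'n, columns by 'p);
  n = CARD('n), p = CARD('p).\<close>

definition frob_norm :: "real^'p^'n \<Rightarrow> real" where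
  "frob_norm M = sqrt (\<Sum>a\<in>UNIV. \<Sum>i\<in>UNIV. (M $ a $ i)\<^sup>2)"

definition unit_mat :: "'n \<Rightarrow> 'p \<Rightarrow> real^'p^'n" where
  "unit_mat a i = (\<chi> b j. if b = a \<and> j = i then 1 else 0)"

definition second_partial :: "(real^'p^'n \<Rightarrow> real) \<Rightarrow> 'n \<Rightarrow> 'p \<Rightarrow> real^'p^'n \<Rightarrow> real" where
  "second_partial f a i M = deriv (deriv (\<lambda>t. f (M + t *\<^sub>R unit_mat a i))) 0"

definition laplacian :: "(real^'p^'n \<Rightarrow> real) \<Rightarrow> real^'p^'n \<Rightarrow> real" where
  "laplacian f M = (\<Sum>a\<in>UNIV. \<Sum>i\<in>UNIV. second_partial f a i M)"

definition pi_MSVS1 :: "real \<Rightarrow> real^'p^'n \<Rightarrow> real" where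
  "pi_MSVS1 \<gamma> M =
     det (transpose M ** M) powr (- (real CARD('n) - real CARD('p) - 1) / 2)
     * frob_norm M powr (- \<gamma>)"

end

theory Submission
  imports Defs
begin


lemma det_has_deriv:
  fixes A :: "real \<Rightarrow> real^'m^'m"
  assumes d: "\<And>k j. ((\<lambda>t. A t $ k $ j) has_real_derivative A' $ k $ j) (at t0)"
  shows "((\<lambda>t. det (A t)) has_real_derivative
     (\<Sum>k\<in>UNIV. det (\<chi> r. if r = k then A' $ k else A t0 $ r))) (at t0)"
proof -
  have "((\<lambda>t. det (A t)) has_real_derivative
     (\<Sum>p\<in>{p. p permutes (UNIV::'m set)}. of_int (sign p) *
        (\<Sum>k\<in>UNIV. A' $ k $ p k * (\<Prod>r\<in>UNIV-{k}. A t0 $ r $ p r)))) (at t0)"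
    unfolding det_def
    by (intro DERIV_sum DERIV_cmult has_field_derivative_prod d)
  moreover have "(\<Sum>p\<in>{p. p permutes (UNIV::'m set)}. of_int (sign p) *
        (\<Sum>k\<in>UNIV. A' $ k $ p k * (\<Prod>r\<in>UNIV-{k}. A t0 $ r $ p r)))
      = (\<Sum>k\<in>UNIV. det (\<chi> r. if r = k then A' $ k else A t0 $ r))"
  proof -
    have "\<And>k p. (\<Prod>r\<in>UNIV. (\<chi> r. if r = k then A' $ k else A t0 $ r) $ r $ p r)
        = A' $ k $ p k * (\<Prod>r\<in>UNIV-{k}. A t0 $ r $ p r)"
      by (subst prod.remove[of _ k]) (auto intro!: prod.cong)
    then show ?thesis
      unfolding det_def by (subst sum.swap) (simp add: sum_distrib_left)
  qed
  ultimately show ?thesis by simp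
qed

lemma row_cramer:
  fixes A Ainv :: "real^'m^'m"
  assumes inv: "\<And>m j. (\<Sum>i\<in>UNIV. Ainv$m$i * A$i$j) = (if m = j then 1 else 0)"
  shows "det (\<chi> r. if r = k then x else A $ r) = (\<Sum>m\<in>UNIV. x$m * Ainv$m$k) * det A"
proof -
  define c where "c i = (\<Sum>m\<in>UNIV. x$m * Ainv$m$i)" for i
  have x: "x = (\<Sum>i\<in>UNIV. c i *s row i A)"
  unfolding vec_eq_iff proof (intro allI)
    fix j
    have "(\<Sum>i\<in>UNIV. c i *s row i A) $ j = (\<Sum>i\<in>UNIV. \<Sum>m\<in>UNIV. x$m * Ainv$m$i * A$i$j)"
      by (simp add: sum_component c_def row_def sum_distrib_right)
    also have "\<dots> = (\<Sum>m\<in>UNIV. x$m * (\<Sum>i\<in>UNIV. Ainv$m$i * A$i$j))"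
      by (subst sum.swap) (simp add: sum_distrib_left mult.assoc)
    also have "\<dots> = x $ j" by (simp add: inv if_distrib cong: if_cong)
    finally show "x $ j = (\<Sum>i\<in>UNIV. c i *s row i A) $ j" by simp
  qed
  have "det (\<chi> r. if r = k then x else A $ r) = det (\<chi> r. if r = k then (\<Sum>i\<in>UNIV. c i *s row i A) else row r A)"
    by (rule arg_cong[where f=det]) (use x in \<open>simp add: row_def vec_eq_iff\<close>)
  also have "\<dots> = c k * det A" using cramer_lemma_transpose[of k "vec_lambda c" A] unfolding vec_lambda_beta .
  finally show ?thesis by (simp add: c_def)
qed



lemma row_expand:
  fixes A Ainv :: "real^'m^'m"
  assumes inv: "\<And>m j. (\<Sum>i\<in>UNIV. Ainv$m$i * A$i$j) = (if m = j then 1 else 0)"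
  shows "y = (\<Sum>i\<in>UNIV. (\<Sum>m\<in>UNIV. y$m * Ainv$m$i) *s A $ i)"
  unfolding vec_eq_iff proof (intro allI)
    fix j
    have "(\<Sum>i\<in>UNIV. (\<Sum>m\<in>UNIV. y$m * Ainv$m$i) *s A $ i) $ j = (\<Sum>i\<in>UNIV. \<Sum>m\<in>UNIV. y$m * Ainv$m$i * A$i$j)"
      by (simp add: sum_component sum_distrib_right)
    also have "\<dots> = (\<Sum>m\<in>UNIV. y$m * (\<Sum>i\<in>UNIV. Ainv$m$i * A$i$j))"
      by (subst sum.swap) (simp add: sum_distrib_left mult.assoc)
    also have "\<dots> = y $ j" by (simp add: inv if_distrib cong: if_cong)
    finally show "y $ j = (\<Sum>i\<in>UNIV. (\<Sum>m\<in>UNIV. y$m * Ainv$m$i) *s A $ i) $ j" by simp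
  qed

lemma two_row_cramer:
  fixes A Ainv :: "real^'m^'m"
  assumes inv: "\<And>m j. (\<Sum>i\<in>UNIV. Ainv$m$i * A$i$j) = (if m = j then 1 else 0)"
    and kl: "k \<noteq> l"
  shows "det (\<chi> r. if r = k then x else if r = l then y else A $ r) =
    ((\<Sum>m\<in>UNIV. x$m * Ainv$m$k) * (\<Sum>m\<in>UNIV. y$m * Ainv$m$l)
     - (\<Sum>m\<in>UNIV. x$m * Ainv$m$l) * (\<Sum>m\<in>UNIV. y$m * Ainv$m$k)) * det A"
proof -
  define cx where "cx j = (\<Sum>m\<in>UNIV. x$m * Ainv$m$j)" for j
  define cy where "cy j = (\<Sum>m\<in>UNIV. y$m * Ainv$m$j)" for j
  define A1 where "A1 = (\<chi> r. if r = k then x else A $ r)"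
  have y: "y = (\<Sum>i\<in>UNIV. cy i *s A $ i)" unfolding cy_def by (rule row_expand[OF inv])
  have "det (\<chi> r. if r = k then x else if r = l then y else A $ r)
      = det (\<chi> r. if r = l then (\<Sum>i\<in>UNIV. cy i *s A $ i) else A1 $ r)"
    by (rule arg_cong[where f=det]) (use kl y in \<open>auto simp: A1_def vec_eq_iff\<close>)
  also have "\<dots> = (\<Sum>i\<in>UNIV. det (\<chi> r. if r = l then cy i *s A $ i else A1 $ r))"
    by (rule det_linear_row_sum) simp
  also have "\<dots> = (\<Sum>i\<in>UNIV. cy i * det (\<chi> r. if r = l then A $ i else A1 $ r))"
    by (simp add: det_row_mul)
  also have "\<dots> = (\<Sum>i\<in>UNIV. (if i = l then cy l * (cx k * det A) else 0)
                     + (if i = k then - (cy k * (cx l * det A)) else 0))"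
  proof (rule sum.cong[OF refl])
    fix i
    show "cy i * det (\<chi> r. if r = l then A $ i else A1 $ r) =
      (if i = l then cy l * (cx k * det A) else 0) + (if i = k then - (cy k * (cx l * det A)) else 0)"
    proof (cases "i = l")
      case True
      have "(\<chi> r. if r = l then A $ i else A1 $ r) = A1"
        using True kl by (auto simp: A1_def vec_eq_iff)
      then show ?thesis using True kl row_cramer[OF inv, of k x]
        by (simp add: A1_def cx_def)
    next
      case il: False
      show ?thesis
      proof (cases "i = k")
        case True
        define B where "B = (\<chi> r. if r = l then x else A $ r)"
        have "(\<chi> r. if r = l then A $ i else A1 $ r) = (\<chi> r. B $ (Transposition.transpose k l r))"
          using True kl by (auto simp: A1_def B_def vec_eq_iff Transposition.transpose_def)
        then have "det (\<chi> r. if r = l then A $ i else A1 $ r) = - det B"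
          using det_permute_rows[of "Transposition.transpose k l" B] kl
          by (simp add: permutes_swap_id sign_swap_id)
        also have "det B = cx l * det A" unfolding B_def cx_def by (rule row_cramer[OF inv])
        finally show ?thesis using True il by simp
      next
        case False
        have "det (\<chi> r. if r = l then A $ i else A1 $ r) = 0"
          by (rule det_identical_rows[of l i]) (use il False in \<open>auto simp: row_def A1_def\<close>)
        then show ?thesis using il False by simp
      qed
    qed
  qed
  also have "\<dots> = (cx k * cy l - cx l * cy k) * det A"
    by (simp add: sum.distrib algebra_simps)
  finally show ?thesis by (simp add: cx_def cy_def)
qed



lemma gram_det_pos:
  fixes M :: "real^'p^'n"
  assumes d0: "det (transpose M ** M) \<noteq> 0"
  shows "det (transpose M ** M) > 0"
proof (rule ccontr)
  let ?S = "transpose M ** M"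
  define f where "f s = det ((1 - s) *\<^sub>R ?S + s *\<^sub>R mat 1)" for s
  assume "\<not> det ?S > 0"
  then have neg: "f 0 < 0" using d0 by (simp add: f_def)
  have f1: "f 1 = 1" by (simp add: f_def)
  have "isCont f s" for s
  proof -
    have "((\<lambda>t. ((1 - t) *\<^sub>R ?S + t *\<^sub>R mat 1) $ k $ j) has_real_derivative (mat 1 - ?S) $ k $ j) (at s)" for k j
      by (simp, auto intro!: derivative_eq_intros)
    from det_has_deriv[of "\<lambda>t. (1 - t) *\<^sub>R ?S + t *\<^sub>R mat 1", OF this]
    show ?thesis unfolding f_def by (rule DERIV_isCont)
  qed
  then have "continuous_on {0..1} f" by (simp add: continuous_at_imp_continuous_on)
  then obtain s where s: "0 \<le> s" "s \<le> 1" "f s = 0" using IVT'[of f 0 0 1] neg f1 by auto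
  then have spos: "s > 0" using neg by (cases "s = 0") auto
  define A where "A = (1 - s) *\<^sub>R ?S + s *\<^sub>R mat 1"
  have "\<not> invertible A" using s by (simp add: f_def A_def invertible_det_nz)
  then obtain v where v: "A *v v = 0" "v \<noteq> 0"
    using matrix_left_invertible_ker[of A] invertible_left_inverse[of A] by blast
  have "v \<bullet> (A *v v) = (1 - s) * (\<Sum>b\<in>UNIV. (\<Sum>k\<in>UNIV. M$b$k * v$k) * (\<Sum>j\<in>UNIV. M$b$j * v$j))
      + s * (v \<bullet> v)"
  proof -
    have "v \<bullet> (A *v v) = (\<Sum>k\<in>UNIV. \<Sum>j\<in>UNIV. v$k * A$k$j * v$j)"
      by (simp add: inner_vec_def matrix_vector_mult_def sum_distrib_left mult.assoc)
    also have "\<dots> = (\<Sum>k\<in>UNIV. \<Sum>j\<in>UNIV. (1 - s) * (\<Sum>b\<in>UNIV. (M$b$k * v$k) * (M$b$j * v$j))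
         + s * (if k = j then v$k * v$j else 0))"
    proof (intro sum.cong refl)
      fix k j
      have Akj: "A$k$j = (1-s) * (\<Sum>b\<in>UNIV. M$b$k * M$b$j) + s * (if k = j then 1 else 0)"
        by (simp add: A_def matrix_matrix_mult_def transpose_def mat_def)
      have "(\<Sum>b\<in>UNIV. (M$b$k * v$k) * (M$b$j * v$j)) = v$k * v$j * (\<Sum>b\<in>UNIV. M$b$k * M$b$j)"
        by (simp add: sum_distrib_left mult_ac)
      then show "v$k * A$k$j * v$j = (1 - s) * (\<Sum>b\<in>UNIV. (M$b$k * v$k) * (M$b$j * v$j))
         + s * (if k = j then v$k * v$j else 0)"
        unfolding Akj by (simp add: algebra_simps)
    qed
    also have "\<dots> = (1 - s) * (\<Sum>b\<in>UNIV. (\<Sum>k\<in>UNIV. M$b$k * v$k) * (\<Sum>j\<in>UNIV. M$b$j * v$j))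
         + s * (v \<bullet> v)"
    proof -
      have sw: "(\<Sum>k\<in>UNIV. \<Sum>j\<in>UNIV. \<Sum>b\<in>UNIV. g k j b) = (\<Sum>b\<in>UNIV. \<Sum>k\<in>UNIV. \<Sum>j\<in>UNIV. g k j b)"
        for g :: "'p \<Rightarrow> 'p \<Rightarrow> 'n \<Rightarrow> real"
        by (rule trans[OF sum.cong[OF refl sum.swap] sum.swap])
      have "(\<Sum>k\<in>UNIV. \<Sum>j\<in>UNIV. (1 - s) * (\<Sum>b\<in>UNIV. (M$b$k * v$k) * (M$b$j * v$j))
         + s * (if k = j then v$k * v$j else 0)) = (1 - s) * (\<Sum>k\<in>UNIV. \<Sum>j\<in>UNIV. \<Sum>b\<in>UNIV. (M$b$k * v$k) * (M$b$j * v$j))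
         + s * (\<Sum>k\<in>UNIV. \<Sum>j\<in>UNIV. (if k = j then v$k * v$j else 0))"
        by (simp only: sum.distrib sum_distrib_left[symmetric])
      also have "\<dots> = (1 - s) * (\<Sum>b\<in>UNIV. (\<Sum>k\<in>UNIV. M$b$k * v$k) * (\<Sum>j\<in>UNIV. M$b$j * v$j))
         + s * (v \<bullet> v)"
        unfolding sw by (simp add: sum_product inner_vec_def)
      finally show ?thesis .
    qed
    finally show ?thesis .
  qed
  moreover have "(\<Sum>b\<in>UNIV. (\<Sum>k\<in>UNIV. M$b$k * v$k) * (\<Sum>j\<in>UNIV. M$b$j * v$j)) \<ge> 0"
    by (intro sum_nonneg) simp
  moreover have "v \<bullet> v > 0" using v by simp
  ultimately have "v \<bullet> (A *v v) > 0" using s spos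
    by (smt (verit) mult_nonneg_nonneg mult_pos_pos)
  then show False using v by simp
qed



lemma second_deriv_formula:
  fixes D N D1 N1 :: "real \<Rightarrow> real" and d2 n2 \<beta> c :: real
  assumes dD: "\<And>t. (D has_real_derivative D1 t) (at t)"
      and dD1: "(D1 has_real_derivative d2) (at 0)"
      and dN: "\<And>t. (N has_real_derivative N1 t) (at t)"
      and dN1: "(N1 has_real_derivative n2) (at 0)"
      and pos: "D 0 > 0" "N 0 > 0"
  shows "deriv (deriv (\<lambda>t. D t powr \<beta> * N t powr c)) 0 =
     D 0 powr \<beta> * N 0 powr c * ((\<beta> * D1 0 / D 0 + c * N1 0 / N 0)\<^sup>2
       + \<beta> * (d2 * D 0 - (D1 0)\<^sup>2) / (D 0)\<^sup>2 + c * (n2 * N 0 - (N1 0)\<^sup>2) / (N 0)\<^sup>2)"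
proof -
  define h where "h t = D t powr \<beta> * N t powr c" for t
  define h1 where "h1 t = \<beta> * D t powr (\<beta> - 1) * D1 t * N t powr c
      + D t powr \<beta> * (c * N t powr (c - 1) * N1 t)" for t
  define U where "U = {t. 0 < D t} \<inter> {t. 0 < N t}"
  have cD: "continuous_on UNIV D" using dD
    by (meson DERIV_isCont continuous_at_imp_continuous_on)
  have cN: "continuous_on UNIV N" using dN
    by (meson DERIV_isCont continuous_at_imp_continuous_on)
  have U: "open U" unfolding U_def
    by (intro open_Int open_Collect_less cD cN continuous_on_const)
  have "0 \<in> U" using pos by (simp add: U_def)
  have dh: "(h has_real_derivative h1 t) (at t)" if "t \<in> U" for t
  proof -
    have "D t > 0" "N t > 0" using that by (auto simp: U_def)
    then have "((\<lambda>t. D t powr \<beta> * N t powr c) has_real_derivative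
       D t powr \<beta> * (c * N t powr (c - 1) * N1 t) + (\<beta> * D t powr (\<beta> - 1) * D1 t) * N t powr c) (at t)"
      using DERIV_fun_powr[OF dD, of t \<beta>] DERIV_fun_powr[OF dN, of t c]
      by (intro DERIV_mult') simp_all
    then show ?thesis unfolding h_def[abs_def] h1_def by (simp add: algebra_simps)
  qed
  have eq: "h1 t = deriv h t" if "t \<in> U" for t
    using dh[OF that] by (simp add: DERIV_imp_deriv)
  define h2 where "h2 = \<beta> * ((\<beta> - 1) * D 0 powr (\<beta> - 2) * D1 0) * D1 0 * N 0 powr c
      + \<beta> * D 0 powr (\<beta> - 1) * d2 * N 0 powr c
      + \<beta> * D 0 powr (\<beta> - 1) * D1 0 * (c * N 0 powr (c - 1) * N1 0)
      + (\<beta> * D 0 powr (\<beta> - 1) * D1 0) * (c * N 0 powr (c - 1) * N1 0)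
      + D 0 powr \<beta> * (c * ((c - 1) * N 0 powr (c - 2) * N1 0) * N1 0)
      + D 0 powr \<beta> * (c * N 0 powr (c - 1) * n2)"
  have "(h1 has_real_derivative h2) (at 0)"
  proof -
    have a: "((\<lambda>t. D t powr (\<beta> - 1)) has_real_derivative (\<beta> - 1) * D 0 powr (\<beta> - 1 - 1) * D1 0) (at 0)"
      using DERIV_fun_powr[OF dD pos(1), of "\<beta> - 1"] by simp
    have b: "((\<lambda>t. N t powr (c - 1)) has_real_derivative (c - 1) * N 0 powr (c - 1 - 1) * N1 0) (at 0)"
      using DERIV_fun_powr[OF dN pos(2), of "c - 1"] by simp
    have c: "((\<lambda>t. D t powr \<beta>) has_real_derivative \<beta> * D 0 powr (\<beta> - 1) * D1 0) (at 0)"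
      using DERIV_fun_powr[OF dD pos(1), of "\<beta>"] by simp
    have d: "((\<lambda>t. N t powr c) has_real_derivative c * N 0 powr (c - 1) * N1 0) (at 0)"
      using DERIV_fun_powr[OF dN pos(2), of "c"] by simp
    show ?thesis unfolding h1_def[abs_def] h2_def
      using DERIV_add[OF DERIV_mult'[OF DERIV_mult'[OF DERIV_cmult[OF a] dD1] d]
                         DERIV_mult'[OF c DERIV_mult'[OF DERIV_cmult[OF b] dN1]]]
      by (rule DERIV_cong) (simp add: algebra_simps)
  qed
  then have "(deriv h has_real_derivative h2) (at 0)"
    by (rule has_field_derivative_transform_within_open[OF _ U \<open>0 \<in> U\<close> eq])
  then have "deriv (deriv h) 0 = h2" by (rule DERIV_imp_deriv)
  moreover have "h2 = D 0 powr \<beta> * N 0 powr c * ((\<beta> * D1 0 / D 0 + c * N1 0 / N 0)\<^sup>2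
       + \<beta> * (d2 * D 0 - (D1 0)\<^sup>2) / (D 0)\<^sup>2 + c * (n2 * N 0 - (N1 0)\<^sup>2) / (N 0)\<^sup>2)"
  proof -
    have p1: "D 0 powr (\<beta> - 1) = D 0 powr \<beta> / D 0" "D 0 powr (\<beta> - 2) = D 0 powr \<beta> / (D 0)\<^sup>2"
      using pos by (simp_all add: powr_diff power2_eq_square powr_numeral)
    have p2: "N 0 powr (c - 1) = N 0 powr c / N 0" "N 0 powr (c - 2) = N 0 powr c / (N 0)\<^sup>2"
      using pos by (simp_all add: powr_diff power2_eq_square powr_numeral)
    show ?thesis unfolding h2_def p1 p2 using pos
      by (simp add: field_simps power2_eq_square)
  qed
  ultimately show ?thesis unfolding h_def[abs_def] by simp
qed



lemma partial_formula:
  fixes M :: "real^'p^'n" and Sinv :: "real^'p^'p" and \<gamma> :: real and a :: 'n and i :: 'p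
  assumes linv: "\<And>m j. (\<Sum>l\<in>UNIV. Sinv$m$l * (transpose M ** M)$l$j) = (if m = j then 1 else 0)"
    and sym: "\<And>m j. Sinv$m$j = Sinv$j$m"
    and Dpos: "det (transpose M ** M) > 0"
    and Npos: "(\<Sum>b\<in>UNIV. \<Sum>j\<in>UNIV. (M$b$j)\<^sup>2) > 0"
  defines "\<beta> \<equiv> - (real CARD('n) - real CARD('p) - 1) / 2"
    and "c \<equiv> - \<gamma> / 2"
    and "r2 \<equiv> (\<Sum>b\<in>UNIV. \<Sum>j\<in>UNIV. (M$b$j)\<^sup>2)"
    and "K \<equiv> (\<Sum>m\<in>UNIV. M$a$m * Sinv$m$i)"
    and "P \<equiv> (\<Sum>l\<in>UNIV. (\<Sum>m\<in>UNIV. M$a$m * Sinv$m$l) * M$a$l)"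
  shows "second_partial (pi_MSVS1 \<gamma>) a i M = pi_MSVS1 \<gamma> M *
     ((\<beta> * (2 * K) + c * (2 * M$a$i / r2))\<^sup>2
      + \<beta> * ((2 * Sinv$i$i + 2 * K\<^sup>2 - 2 * Sinv$i$i * P) - (2 * K)\<^sup>2)
      + c * (2 * r2 - (2 * M$a$i)\<^sup>2) / r2\<^sup>2)"
proof -
  define e where "e b k = (if b = a \<and> k = i then 1 else 0::real)" for b k
  define X where "X t = M + t *\<^sub>R unit_mat a i" for t
  have X: "X t $ b $ k = M$b$k + t * e b k" for t b k
    by (simp add: X_def unit_mat_def e_def)
  define S where "S t = transpose (X t) ** X t" for t
  have S: "S t $ k $ l = (\<Sum>b\<in>UNIV. (M$b$k + t * e b k) * (M$b$l + t * e b l))" for t k l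
    by (simp add: S_def matrix_matrix_mult_def transpose_def X)
  define N where "N t = (\<Sum>b\<in>UNIV. \<Sum>j\<in>UNIV. (M$b$j + t * e b j)\<^sup>2)" for t
  define D where "D t = det (S t)" for t
  have fun_eq: "(\<lambda>t. pi_MSVS1 \<gamma> (M + t *\<^sub>R unit_mat a i)) = (\<lambda>t. D t powr \<beta> * N t powr c)"
  proof
    fix t
    have N0: "N t \<ge> 0" unfolding N_def by (intro sum_nonneg) simp
    have "frob_norm (X t) = N t powr (1/2)"
      using N0 by (simp add: frob_norm_def N_def X powr_half_sqrt)
    then have "frob_norm (X t) powr (- \<gamma>) = N t powr c"
      using N0 by (simp add: powr_powr c_def)
    then show "pi_MSVS1 \<gamma> (M + t *\<^sub>R unit_mat a i) = D t powr \<beta> * N t powr c"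
      by (simp add: pi_MSVS1_def D_def S_def X_def \<beta>_def)
  qed
  define S1 where "S1 t = (\<chi> k l. \<Sum>b\<in>UNIV. e b k * (M$b$l + t * e b l) + (M$b$k + t * e b k) * e b l)" for t
  define S2 where "S2 = (\<chi> k l. \<Sum>b\<in>UNIV. 2 * (e b k * e b l))"
  have dS: "((\<lambda>t. S t $ k $ l) has_real_derivative S1 t $ k $ l) (at t)" for t k l
    unfolding S S1_def by (auto intro!: derivative_eq_intros sum.cong simp: algebra_simps)
  have dS1: "((\<lambda>t. S1 t $ k $ l) has_real_derivative S2 $ k $ l) (at t)" for t k l
    unfolding S1_def S2_def by (auto intro!: derivative_eq_intros sum.cong simp: algebra_simps)
  define N1 where "N1 t = (\<Sum>b\<in>UNIV. \<Sum>j\<in>UNIV. 2 * (M$b$j + t * e b j) * e b j)" for t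
  define n2 where "n2 = (\<Sum>b\<in>UNIV. \<Sum>j\<in>UNIV. 2 * e b j * e b j)"
  have dN: "(N has_real_derivative N1 t) (at t)" for t
    unfolding N_def[abs_def] N1_def by (auto intro!: derivative_eq_intros sum.cong simp: algebra_simps)
  have dN1: "(N1 has_real_derivative n2) (at t)" for t
    unfolding N1_def[abs_def] n2_def by (auto intro!: derivative_eq_intros sum.cong simp: algebra_simps)
  define R where "R k t = (\<chi> r. if r = k then S1 t $ k else S t $ r)" for k t
  define D1 where "D1 t = (\<Sum>k\<in>UNIV. det (R k t))" for t
  have dD: "(D has_real_derivative D1 t) (at t)" for t
    unfolding D_def[abs_def] D1_def R_def by (rule det_has_deriv[OF dS])
  define A' where "A' k = (\<chi> r c. if r = k then S2 $ k $ c else S1 0 $ r $ c)" for k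
  define d2 where "d2 = (\<Sum>k\<in>UNIV. \<Sum>l\<in>UNIV. det (\<chi> r. if r = l then A' k $ l else R k 0 $ r))"
  have dD1: "(D1 has_real_derivative d2) (at 0)"
    unfolding D1_def[abs_def] d2_def
  proof (intro DERIV_sum det_has_deriv)
    fix k r c
    show "((\<lambda>t. R k t $ r $ c) has_real_derivative A' k $ r $ c) (at 0)"
      by (cases "r = k") (simp_all add: R_def A'_def dS dS1)
  qed
  have e2: "e b k = (if b = a then (if k = i then 1 else 0) else 0)" for b k
    by (simp add: e_def)
  have vN: "N 0 = r2" "N1 0 = 2 * M$a$i" "n2 = 2"
  proof -
    show "N 0 = r2" by (simp add: N_def r2_def)
    have "2 * (M$b$j + 0 * e b j) * e b j = (if j = i then (if b = a then 2 * M$a$i else 0) else 0)" for b j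
      by (simp add: e_def)
    then show "N1 0 = 2 * M$a$i" unfolding N1_def by simp
    have "2 * e b j * e b j = (if j = i then (if b = a then 2 else 0) else (0::real))" for b j
      by (simp add: e_def)
    then show "n2 = 2" unfolding n2_def by simp
  qed
  define S0 where "S0 = transpose M ** M"
  have SS0: "S 0 = S0" by (simp add: S_def X_def S0_def)
  define B where "B k m = (if k = i then M$a$m else 0) + (if m = i then M$a$k else 0)" for k m
  have se1: "(\<Sum>b\<in>UNIV. e b k * f b) = (if k = i then f a else 0)" for k and f :: "'n \<Rightarrow> real"
  proof -
    have "e b k * f b = (if b = a then (if k = i then f a else 0) else 0)" for b by (simp add: e_def)
    then show ?thesis by simp
  qed
  have se2: "(\<Sum>b\<in>UNIV. f b * e b k) = (if k = i then f a else 0)" for k and f :: "'n \<Rightarrow> real"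
    using se1[of k f] by (simp add: mult.commute)
  have S10: "S1 0 $ k $ m = B k m" for k m
    by (simp add: S1_def B_def sum.distrib se1 se2)
  have S10v: "S1 0 $ k = (\<chi> m. B k m)" for k
    by (simp add: vec_eq_iff S10)
  define Q where "Q k j = (\<Sum>m\<in>UNIV. B k m * Sinv$m$j)" for k j
  have Q: "Q k j = (if k = i then (\<Sum>m\<in>UNIV. M$a$m * Sinv$m$j) else 0) + M$a$k * Sinv$i$j" for k j
  proof -
    have h: "(if m = i then x else 0) * Sinv$m$j = (if m = i then x * Sinv$i$j else 0)" for m x
      by simp
    show ?thesis by (cases "k = i") (simp_all add: Q_def B_def distrib_right sum.distrib h)
  qed
  have trQ: "(\<Sum>k\<in>UNIV. Q k k) = 2 * K"
  proof -
    have "(\<Sum>k\<in>UNIV. Q k k) = K + (\<Sum>k\<in>UNIV. M$a$k * Sinv$k$i)"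
    proof -
      have "(\<Sum>k\<in>UNIV. Q k k) = (\<Sum>k\<in>UNIV. (if k = i then K else 0)) + (\<Sum>k\<in>UNIV. M$a$k * Sinv$i$k)"
        unfolding Q sum.distrib K_def by (rule arg_cong2[where f="(+)"]) (auto intro: sum.cong)
      then show ?thesis using sym[of i] by simp
    qed
    then show ?thesis by (simp add: K_def)
  qed
  have DS0: "D 0 = det S0" by (simp add: D_def SS0)
  have vD1: "D1 0 = 2 * K * D 0"
  proof -
    have "D1 0 = (\<Sum>k\<in>UNIV. Q k k * D 0)"
      unfolding D1_def R_def SS0 DS0 S10v Q_def
      by (intro sum.cong refl) (simp add: row_cramer[OF linv[folded S0_def]])
    then show ?thesis by (simp add: sum_distrib_right[symmetric] trQ)
  qed
  have linv0: "\<And>m j. (\<Sum>l\<in>UNIV. Sinv$m$l * S0$l$j) = (if m = j then 1 else 0)"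
    using linv by (simp add: S0_def)
  define K' where "K' j = (\<Sum>m\<in>UNIV. M$a$m * Sinv$m$j)" for j
  have QK: "Q k j = (if k = i then K' j else 0) + M$a$k * Sinv$i$j" for k j
    by (simp add: Q K'_def)
  have S2: "(\<Sum>m\<in>UNIV. S2$k$m * Sinv$m$k) = (if k = i then 2 * Sinv$i$i else 0)" for k
  proof -
    have "S2 $ k $ m = (if m = i then (if k = i then 2 else 0) else 0)" for m
    proof -
      have "2 * (e b k * e b m) = (if b = a then (if m = i then (if k = i then 2 else 0) else 0) else 0)" for b
        by (simp add: e_def)
      then show ?thesis by (simp add: S2_def)
    qed
    then have "S2$k$m * Sinv$m$k = (if m = i then (if k = i then 2 * Sinv$i$i else 0) else 0)" for m
      by simp
    then show ?thesis by simp
  qed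
  have entry: "det (\<chi> r. if r = l then A' k $ l else R k 0 $ r) =
     (if l = k then (if k = i then 2 * Sinv$i$i else 0) else Q l l * Q k k - Q l k * Q k l) * D 0" for k l
  proof (cases "l = k")
    case True
    have "(\<chi> r. if r = l then A' k $ l else R k 0 $ r) = (\<chi> r. if r = k then (\<chi> c. S2$k$c) else S0 $ r)"
      using True by (simp add: vec_eq_iff A'_def R_def SS0)
    then show ?thesis using True row_cramer[OF linv0, of k "\<chi> c. S2$k$c"] S2[of k]
      by (simp add: DS0)
  next
    case False
    have "(\<chi> r. if r = l then A' k $ l else R k 0 $ r) =
       (\<chi> r. if r = l then (\<chi> m. B l m) else if r = k then (\<chi> m. B k m) else S0 $ r)"
      using False by (simp add: vec_eq_iff A'_def R_def SS0 S10)
    then show ?thesis using False two_row_cramer[OF linv0 False, of "\<chi> m. B l m" "\<chi> m. B k m"]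
      by (simp add: DS0 Q_def)
  qed
  have QQ: "(\<Sum>k\<in>UNIV. \<Sum>l\<in>UNIV. Q l k * Q k l) = 2 * K\<^sup>2 + 2 * Sinv$i$i * P"
  proof -
    have prod: "Q l k * Q k l = (if l = i then (if k = i then K' k * K' l else 0) else 0)
       + (if l = i then K' k * M$a$k * Sinv$i$l else 0)
       + (if k = i then M$a$l * Sinv$i$k * K' l else 0)
       + (M$a$k * Sinv$i$k) * (M$a$l * Sinv$i$l)" for k l
      by (simp add: QK algebra_simps)
    have t1: "(\<Sum>k\<in>UNIV. \<Sum>l\<in>UNIV. (if l = i then (if k = i then K' k * K' l else 0) else 0)) = K\<^sup>2"
      by (simp add: K_def K'_def power2_eq_square)
    have t2: "(\<Sum>k\<in>UNIV. \<Sum>l\<in>UNIV. (if l = i then K' k * M$a$k * Sinv$i$l else 0)) = Sinv$i$i * P"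
      by (simp add: P_def K'_def sum_distrib_left mult_ac)
    have t3: "(\<Sum>k\<in>UNIV. \<Sum>l\<in>UNIV. (if k = i then M$a$l * Sinv$i$k * K' l else 0)) = Sinv$i$i * P"
    proof -
      have "(\<Sum>k\<in>UNIV. \<Sum>l\<in>UNIV. (if k = i then M$a$l * Sinv$i$k * K' l else 0))
         = (\<Sum>k\<in>UNIV. if k = i then (\<Sum>l\<in>UNIV. M$a$l * Sinv$i$k * K' l) else 0)"
        by (intro sum.cong refl) simp
      also have "\<dots> = Sinv$i$i * P" by (simp add: P_def K'_def sum_distrib_left mult_ac)
      finally show ?thesis .
    qed
    have t4: "(\<Sum>k\<in>UNIV. \<Sum>l\<in>UNIV. (M$a$k * Sinv$i$k) * (M$a$l * Sinv$i$l)) = K\<^sup>2"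
    proof -
      have "(\<Sum>k\<in>UNIV. M$a$k * Sinv$i$k) = K" unfolding K_def using sym[of i] by simp
      then show ?thesis by (simp add: sum_product[symmetric] power2_eq_square)
    qed
    show ?thesis unfolding prod sum.distrib t1 t2 t3 t4 by simp
  qed
  have vd2: "d2 = (2 * Sinv$i$i + 2 * K\<^sup>2 - 2 * Sinv$i$i * P) * D 0"
  proof -
    have "d2 = (\<Sum>k\<in>UNIV. \<Sum>l\<in>UNIV. ((if l = i then (if k = i then 2 * Sinv$i$i else 0) else 0)
         + Q l l * Q k k - Q l k * Q k l) * D 0)"
      unfolding d2_def entry by (intro sum.cong refl) auto
    also have "\<dots> = (2 * Sinv$i$i + (\<Sum>k\<in>UNIV. Q k k) * (\<Sum>k\<in>UNIV. Q k k)
        - (\<Sum>k\<in>UNIV. \<Sum>l\<in>UNIV. Q l k * Q k l)) * D 0"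
    proof -
      have gen: "(\<Sum>k\<in>UNIV. \<Sum>l\<in>UNIV. (f k l + g k l - h k l) * z) =
         ((\<Sum>k\<in>UNIV. \<Sum>l\<in>UNIV. f k l) + (\<Sum>k\<in>UNIV. \<Sum>l\<in>UNIV. g k l)
           - (\<Sum>k\<in>UNIV. \<Sum>l\<in>UNIV. h k l)) * z"
        for f g h :: "'p \<Rightarrow> 'p \<Rightarrow> real" and z
        by (simp only: sum_distrib_right[symmetric] sum.distrib sum_subtractf)
      have "(\<Sum>k\<in>UNIV. \<Sum>l\<in>UNIV. Q l l * Q k k) = (\<Sum>k\<in>UNIV. Q k k) * (\<Sum>k\<in>UNIV. Q k k)"
        by (simp add: sum_product mult.commute)
      then show ?thesis unfolding gen by simp
    qed
    also have "\<dots> = (2 * Sinv$i$i + 2 * K\<^sup>2 - 2 * Sinv$i$i * P) * D 0"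
      unfolding trQ QQ by (simp add: power2_eq_square)
    finally show ?thesis .
  qed
  have D0: "D 0 > 0" using Dpos by (simp add: D_def S_def X_def)
  have "second_partial (pi_MSVS1 \<gamma>) a i M = deriv (deriv (\<lambda>t. D t powr \<beta> * N t powr c)) 0"
    by (simp add: second_partial_def fun_eq)
  also have "\<dots> = D 0 powr \<beta> * N 0 powr c * ((\<beta> * D1 0 / D 0 + c * N1 0 / N 0)\<^sup>2
       + \<beta> * (d2 * D 0 - (D1 0)\<^sup>2) / (D 0)\<^sup>2 + c * (n2 * N 0 - (N1 0)\<^sup>2) / (N 0)\<^sup>2)"
    by (rule second_deriv_formula[OF dD dD1 dN dN1 D0]) (use vN Npos r2_def in simp)
  also have "D 0 powr \<beta> * N 0 powr c = pi_MSVS1 \<gamma> M"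
    using fun_eq[THEN fun_cong, of 0] by simp
  finally have eq: "second_partial (pi_MSVS1 \<gamma>) a i M = pi_MSVS1 \<gamma> M * ((\<beta> * D1 0 / D 0 + c * N1 0 / N 0)\<^sup>2
       + \<beta> * (d2 * D 0 - (D1 0)\<^sup>2) / (D 0)\<^sup>2 + c * (n2 * N 0 - (N1 0)\<^sup>2) / (N 0)\<^sup>2)" .
  have r2: "r2 > 0" using Npos r2_def by simp
  have "(\<beta> * D1 0 / D 0 + c * N1 0 / N 0)\<^sup>2
       + \<beta> * (d2 * D 0 - (D1 0)\<^sup>2) / (D 0)\<^sup>2 + c * (n2 * N 0 - (N1 0)\<^sup>2) / (N 0)\<^sup>2
     = (\<beta> * (2 * K) + c * (2 * M$a$i / r2))\<^sup>2
      + \<beta> * ((2 * Sinv$i$i + 2 * K\<^sup>2 - 2 * Sinv$i$i * P) - (2 * K)\<^sup>2)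
      + c * (2 * r2 - (2 * M$a$i)\<^sup>2) / r2\<^sup>2"
    unfolding vD1 vd2 vN using D0 r2 by (simp add: power2_eq_square field_simps)
  then show ?thesis using eq by simp
qed



theorem proposition2:
  fixes \<gamma> :: real and M :: "real^'p^'n"
  assumes "CARD('n) > CARD('p) + 1"
    and "\<gamma> \<ge> 0"
    and "det (transpose M ** M) \<noteq> 0"
  shows "laplacian (pi_MSVS1 \<gamma>) M =
     \<gamma> * (\<gamma> + real CARD('n) * real CARD('p) - 2 * (real CARD('p))\<^sup>2 - 2 * real CARD('p) + 2)
       * frob_norm M powr (-2) * pi_MSVS1 \<gamma> M"
proof -
  define S0 where "S0 = transpose M ** M"
  have d0: "det S0 \<noteq> 0" using assms(3) by (simp add: S0_def)
  have Dpos: "det (transpose M ** M) > 0" using gram_det_pos[OF assms(3)] .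
  obtain Sinv where SI: "S0 ** Sinv = mat 1" and IS: "Sinv ** S0 = mat 1"
    using d0 unfolding invertible_det_nz[symmetric] invertible_def by blast
  have S0t: "transpose S0 = S0" by (simp add: S0_def matrix_transpose_mul)
  have "transpose Sinv ** S0 = mat 1"
    using arg_cong[OF SI, of transpose] by (simp add: matrix_transpose_mul S0t transpose_mat)
  then have tS: "transpose Sinv = Sinv"
    by (metis IS SI matrix_mul_assoc matrix_mul_lid matrix_mul_rid)
  have sym: "Sinv$m$j = Sinv$j$m" for m j
    using arg_cong[OF tS, of "\<lambda>A. A$j$m"] by (simp add: transpose_def)
  have linv: "(\<Sum>l\<in>UNIV. Sinv$m$l * (transpose M ** M)$l$j) = (if m = j then 1 else 0)" for m j
    using arg_cong[OF IS, of "\<lambda>A. A$m$j"] by (simp add: matrix_matrix_mult_def mat_def S0_def)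
  define r2 where "r2 = (\<Sum>b\<in>UNIV. \<Sum>j\<in>UNIV. (M$b$j)\<^sup>2)"
  have Npos: "r2 > 0"
  proof (rule ccontr)
    assume "\<not> r2 > 0"
    then have "r2 = 0" using r2_def by (smt (verit) sum_nonneg zero_le_power2)
    then have "\<forall>b\<in>UNIV. \<forall>j\<in>UNIV. (M$b$j)\<^sup>2 = 0" unfolding r2_def
      by (simp add: sum_nonneg_eq_0_iff sum_nonneg)
    then have "M = 0" by (simp add: vec_eq_iff)
    then have "S0 = mat 0" by (simp add: S0_def vec_eq_iff matrix_matrix_mult_def mat_def)
    moreover have "det (0::real^'p^'p) = 0"
      by (rule det_zero_row(1)[of undefined]) (simp add: row_def vec_eq_iff)
    ultimately show False using d0 by simp
  qed
  define \<beta> where "\<beta> = - (real CARD('n) - real CARD('p) - 1) / 2"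
  define c where "c = - \<gamma> / 2"
  define Km where "Km = M ** Sinv"
  have Km: "Km$a$i = (\<Sum>m\<in>UNIV. M$a$m * Sinv$m$i)" for a i
    by (simp add: Km_def matrix_matrix_mult_def)
  define T where "T = (\<Sum>i\<in>UNIV. Sinv$i$i)"
  define P where "P a = (\<Sum>l\<in>UNIV. Km$a$l * M$a$l)" for a
  have s1: "(\<Sum>a\<in>UNIV. \<Sum>i\<in>UNIV. (Km$a$i)\<^sup>2) = T"
  proof -
    have "transpose Km ** Km = Sinv ** (S0 ** Sinv)"
      by (simp add: Km_def matrix_transpose_mul tS S0_def matrix_mul_assoc)
    then have e: "transpose Km ** Km = Sinv" by (simp add: SI)
    have "(\<Sum>a\<in>UNIV. \<Sum>i\<in>UNIV. (Km$a$i)\<^sup>2) = (\<Sum>i\<in>UNIV. (transpose Km ** Km)$i$i)"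
      by (subst sum.swap) (simp add: matrix_matrix_mult_def transpose_def power2_eq_square)
    then show ?thesis by (simp add: e T_def)
  qed
  have s2: "(\<Sum>a\<in>UNIV. \<Sum>i\<in>UNIV. Km$a$i * M$a$i) = real CARD('p)"
  proof -
    have "transpose Km ** M = Sinv ** S0"
      by (simp add: Km_def matrix_transpose_mul tS S0_def matrix_mul_assoc)
    then have e: "transpose Km ** M = mat 1" by (simp add: IS)
    have "(\<Sum>a\<in>UNIV. \<Sum>i\<in>UNIV. Km$a$i * M$a$i) = (\<Sum>i\<in>UNIV. (transpose Km ** M)$i$i)"
      by (subst sum.swap) (simp add: matrix_matrix_mult_def transpose_def)
    then show ?thesis by (simp add: e mat_def)
  qed
  have sp: "second_partial (pi_MSVS1 \<gamma>) a i M = pi_MSVS1 \<gamma> M *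
     ((4 * \<beta>\<^sup>2 - 2 * \<beta>) * (Km$a$i)\<^sup>2 + (8 * \<beta> * c / r2) * (Km$a$i * M$a$i)
      + ((4 * c\<^sup>2 - 4 * c) / r2\<^sup>2) * (M$a$i)\<^sup>2 + 2 * \<beta> * Sinv$i$i - 2 * \<beta> * (Sinv$i$i * P a)
      + 2 * c / r2)" for a i
  proof -
    have pf: "second_partial (pi_MSVS1 \<gamma>) a i M = pi_MSVS1 \<gamma> M *
     ((\<beta> * (2 * Km$a$i) + c * (2 * M$a$i / r2))\<^sup>2
      + \<beta> * ((2 * Sinv$i$i + 2 * (Km$a$i)\<^sup>2 - 2 * Sinv$i$i * P a) - (2 * Km$a$i)\<^sup>2)
      + c * (2 * r2 - (2 * M$a$i)\<^sup>2) / r2\<^sup>2)"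
      using partial_formula[OF linv sym Dpos Npos[unfolded r2_def], of \<gamma> a i]
      unfolding Km[symmetric] r2_def[symmetric] \<beta>_def[symmetric] c_def[symmetric] P_def[symmetric] .
    show ?thesis unfolding pf using Npos
      by (simp add: power2_eq_square field_simps)
  qed
  have tot: "(\<Sum>a\<in>UNIV. \<Sum>i\<in>UNIV.
      ((4 * \<beta>\<^sup>2 - 2 * \<beta>) * (Km$a$i)\<^sup>2 + (8 * \<beta> * c / r2) * (Km$a$i * M$a$i)
      + ((4 * c\<^sup>2 - 4 * c) / r2\<^sup>2) * (M$a$i)\<^sup>2 + 2 * \<beta> * Sinv$i$i - 2 * \<beta> * (Sinv$i$i * P a)
      + 2 * c / r2))
    = (4 * \<beta>\<^sup>2 - 2 * \<beta>) * T + (8 * \<beta> * c / r2) * real CARD('p)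
      + ((4 * c\<^sup>2 - 4 * c) / r2\<^sup>2) * r2 + 2 * \<beta> * (real CARD('n) * T)
      - 2 * \<beta> * (T * real CARD('p)) + real CARD('n) * real CARD('p) * (2 * c / r2)"
  proof -
    have sP: "(\<Sum>a\<in>UNIV. \<Sum>i\<in>UNIV. Sinv$i$i * P a) = T * real CARD('p)"
    proof -
      have "(\<Sum>a\<in>UNIV. \<Sum>i\<in>UNIV. Sinv$i$i * P a) = (\<Sum>a\<in>UNIV. T * P a)"
        by (simp add: T_def sum_distrib_right)
      also have "\<dots> = T * (\<Sum>a\<in>UNIV. P a)" by (simp add: sum_distrib_left)
      finally show ?thesis using s2 by (simp add: P_def)
    qed
    show ?thesis
    proof -
      have a1: "(\<Sum>a\<in>UNIV. \<Sum>i\<in>UNIV. 8 * \<beta> * c * (Km $ a $ i * M $ a $ i) / r2) = 8 * \<beta> * c * real CARD('p) / r2"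
        using s2 by (simp add: sum_divide_distrib[symmetric] sum_distrib_left[symmetric])
      have a2: "(\<Sum>a\<in>UNIV. \<Sum>i\<in>UNIV. (4 * c\<^sup>2 - 4 * c) * (M $ a $ i)\<^sup>2 / r2\<^sup>2) = (4 * c\<^sup>2 - 4 * c) * r2 / r2\<^sup>2"
        by (simp add: sum_divide_distrib[symmetric] sum_distrib_left[symmetric] r2_def)
      show ?thesis
        by (simp add: sum.distrib sum_subtractf sum_distrib_left[symmetric] s1 s2 sP r2_def[symmetric] T_def[symmetric] a1 a2)
    qed
  qed
  have fr: "frob_norm M powr (-2) = 1 / r2"
  proof -
    have "frob_norm M = sqrt r2" by (simp add: frob_norm_def r2_def)
    then show ?thesis using Npos by (simp add: powr_minus powr_numeral divide_inverse)
  qed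
  have "laplacian (pi_MSVS1 \<gamma>) M = pi_MSVS1 \<gamma> M * ((4 * \<beta>\<^sup>2 - 2 * \<beta>) * T + (8 * \<beta> * c / r2) * real CARD('p)
      + ((4 * c\<^sup>2 - 4 * c) / r2\<^sup>2) * r2 + 2 * \<beta> * (real CARD('n) * T)
      - 2 * \<beta> * (T * real CARD('p)) + real CARD('n) * real CARD('p) * (2 * c / r2))"
    unfolding laplacian_def sp tot[symmetric] by (simp add: sum_distrib_left)
  moreover have "(4 * \<beta>\<^sup>2 - 2 * \<beta>) * T + (8 * \<beta> * c / r2) * real CARD('p)
      + ((4 * c\<^sup>2 - 4 * c) / r2\<^sup>2) * r2 + 2 * \<beta> * (real CARD('n) * T)
      - 2 * \<beta> * (T * real CARD('p)) + real CARD('n) * real CARD('p) * (2 * c / r2)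
    = \<gamma> * (\<gamma> + real CARD('n) * real CARD('p) - 2 * (real CARD('p))\<^sup>2 - 2 * real CARD('p) + 2) * (1 / r2)"
    using Npos by (simp add: \<beta>_def c_def power2_eq_square field_simps)
  ultimately show ?thesis unfolding fr by simp
qed

end
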